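(* Let $p\ge 1$ be an integer, put $m:=2p+1$, and let $\theta:=e^{-\pi i/4}$. For $k=0,1,\dots,4p+1$ let $y_k:=-1+\frac{2k}{4p+1}$ and $\mu_k:=H(y_k)$, where $$H(y):=\int_{\mathbb{R}}\frac{e^{-2\pi x^2+2\pi\theta x y}}{\cosh(\pi\theta x)}\,dx=\frac{1}{\cos(\pi y)}\Big[\sqrt{2}\cos(\pi y/2)\,e^{-\frac{\pi i}{8}(4y^2+1)}-e^{-\frac{\pi i}{4}}\Big].$$ Let $L$ be the linear functional on the space of complex polynomials of degree at most $4p+1$ defined by $L[x^k]=\mu_k$ for $k=0,1,\dots,4p+1$. Let $P_{-1}\equiv 0$, $P_0\equiv 1$, and $P_{n+1}(x)=(x-a_n)P_n(x)-b_nP_{n-1}(x)$ for $n=0,1,\dots,m-1$, where $a_n=L[xP_n^2]/L[P_n^2]$ and $b_n=L[P_n^2]/L[P_{n-1}^2]$ (with $b_0$ arbitrary), and assume that $L[P_n^2]\neq 0$ for $0\le n\le m-1$, so that these monic polynomials are well defined; they satisfy $\deg P_n=n$ and $L[P_nQ]=0$ for every polynomial $Q$ of degree at most $n-1$, $1\le n\le m$. Then the polynomial $P_m$ satisfies $P_m(x)=-x^mP_m(1/x)$ for all $x\neq 0$.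
   Context: $\cosh$ and $\cos$ are the usual complex hyperbolic cosine and cosine; note $y_k\neq\pm 1/2$ for all $k$, so $\mu_k$ is well defined. The polynomials $P_n$ are the monic orthogonal polynomials with respect to the (generally non-positive) functional $L$. *)

theory Defs
  imports "HOL-Analysis.Analysis" "HOL-Computational_Algebra.Polynomial"
begin

text \<open>Closed form of H(y) (equal to the integral given in the paper).\<close>
definition H :: "real \<Rightarrow> complex" where
  "H y = (1 / complex_of_real (cos (pi * y))) *
     (complex_of_real (sqrt 2 * cos (pi * y / 2)) *
        exp (- (complex_of_real pi * \<i> / 8) * complex_of_real (4 * y\<^sup>2 + 1))
      - exp (- complex_of_real pi * \<i> / 4))"

definition ynode :: "nat \<Rightarrow> nat \<Rightarrow> real" where
  "ynode p k = -1 + 2 * real k / (4 * real p + 1)"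

definition moment :: "nat \<Rightarrow> nat \<Rightarrow> complex" where
  "moment p k = H (ynode p k)"

text \<open>The linear functional L with L[x^k] = moment p k (meaningful on degree \<le> 4p+1).\<close>
definition Lfun :: "nat \<Rightarrow> complex poly \<Rightarrow> complex" where
  "Lfun p q = (\<Sum>k\<le>degree q. coeff q k * moment p k)"

fun opoly :: "(complex poly \<Rightarrow> complex) \<Rightarrow> nat \<Rightarrow> complex poly" where
  "opoly L 0 = 1"
| "opoly L (Suc 0) = [:- (L [:0, 1:] / L 1), 1:]"
| "opoly L (Suc (Suc n)) =
     (let Q = opoly L (Suc n); R = opoly L n;
          a = L ([:0, 1:] * Q\<^sup>2) / L (Q\<^sup>2);
          b = L (Q\<^sup>2) / L (R\<^sup>2)
      in [:- a, 1:] * Q - smult b R)"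

end

theory Submission
  imports Defs
begin


lemma Lfun_ext:
  assumes "degree q \<le> M"
  shows "Lfun p q = (\<Sum>k\<le>M. coeff q k * moment p k)"
  unfolding Lfun_def
  by (rule sum.mono_neutral_left) (use assms in \<open>auto simp: coeff_eq_0\<close>)

lemma Lfun_add: "Lfun p (f + g) = Lfun p f + Lfun p g"
proof -
  let ?M = "max (degree f) (degree g)"
  have "degree (f+g) \<le> ?M" by (simp add: degree_add_le)
  then show ?thesis
    by (simp add: Lfun_ext[of _ ?M] Lfun_ext[of f ?M] Lfun_ext[of g ?M] distrib_right sum.distrib)
qed

lemma Lfun_smult: "Lfun p (smult c f) = c * Lfun p f"
  using Lfun_ext[of "smult c f" "degree f" p] Lfun_ext[of f "degree f" p]
  by (simp add: sum_distrib_left mult.assoc)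

lemma Lfun_minus: "Lfun p (f - g) = Lfun p f - Lfun p g"
  using Lfun_add[of p "f - g" g] by simp

lemma Lfun_uminus: "Lfun p (- f) = - Lfun p f"
  using Lfun_smult[of p "-1" f] by simp

lemma Lfun_zero: "Lfun p 0 = 0"
  by (simp add: Lfun_def)

lemma Lfun_sum: "Lfun p (\<Sum>i\<in>S. f i) = (\<Sum>i\<in>S. Lfun p (f i))"
  by (induct S rule: infinite_finite_induct) (auto simp: Lfun_zero Lfun_add)

lemma Lfun_monom: "Lfun p (monom c k) = c * moment p k"
proof -
  have "Lfun p (monom c k) = (\<Sum>i\<le>k. coeff (monom c k) i * moment p i)"
    by (rule Lfun_ext) (simp add: degree_monom_le)
  also have "\<dots> = c * moment p k"
    by (simp add: coeff_monom if_distrib[of "\<lambda>x. x * moment p _"] sum.delta cong: if_cong)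
  finally show ?thesis .
qed

lemma H_even: "H (- y) = H y"
  by (simp add: H_def)

lemma moment_sym:
  assumes "k \<le> 4*p+1"
  shows "moment p k = moment p (4*p+1-k)"
proof -
  have "ynode p (4*p+1-k) = - ynode p k"
    using assms by (simp add: ynode_def of_nat_diff field_simps)
  then show ?thesis by (simp add: moment_def H_even)
qed

definition bnd :: "nat \<Rightarrow> complex poly \<Rightarrow> bool" where
  "bnd d F \<longleftrightarrow> (\<forall>k\<ge>d. coeff F k = 0)"

definition orth :: "nat \<Rightarrow> nat \<Rightarrow> complex poly \<Rightarrow> bool" where
  "orth p n Q \<longleftrightarrow> (\<forall>F. bnd n F \<longrightarrow> Lfun p (F * Q) = 0)"

lemma bnd_mono: "bnd d F \<Longrightarrow> d \<le> e \<Longrightarrow> bnd e F"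
  by (auto simp: bnd_def)

lemma bnd_x: "bnd d F \<Longrightarrow> bnd (Suc d) ([:0,1:] * F)"
  by (auto simp: bnd_def coeff_pCons split: nat.splits)

lemma bnd_decomp:
  assumes "bnd (Suc d) F" "bnd (Suc d) Q" "coeff Q d = 1"
  shows "bnd d (F - smult (coeff F d) Q)"
  using assms unfolding bnd_def
  by (metis Suc_le_eq cancel_comm_monoid_add_class.diff_cancel coeff_diff coeff_smult
      le_neq_implies_less mult.right_neutral mult_zero_right)

lemma orth_bnd: "orth p n Q \<Longrightarrow> bnd n F \<Longrightarrow> Lfun p (F * Q) = 0"
  by (simp add: orth_def)



lemma opoly_props:
  fixes p :: nat
  assumes nd: "\<And>n. n \<le> 2 * p \<Longrightarrow> Lfun p ((opoly (Lfun p) n)\<^sup>2) \<noteq> 0"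
  shows "Suc n \<le> 2*p+1 \<Longrightarrow>
     (bnd (Suc n) (opoly (Lfun p) n) \<and> coeff (opoly (Lfun p) n) n = 1 \<and> orth p n (opoly (Lfun p) n)) \<and>
     (bnd (Suc (Suc n)) (opoly (Lfun p) (Suc n)) \<and> coeff (opoly (Lfun p) (Suc n)) (Suc n) = 1 \<and>
        orth p (Suc n) (opoly (Lfun p) (Suc n)))"
proof (induction n)
  case 0
  let ?L = "Lfun p"
  define a where "a = ?L [:0, 1:] / ?L 1"
  have L1: "?L 1 \<noteq> 0" using nd[of 0] by simp
  have Q1: "opoly ?L 1 = [:-a, 1:]" by (simp add: a_def)
  have "bnd 1 (1::complex poly)" by (auto simp: bnd_def coeff_1)
  moreover have "orth p 0 1"
  proof -
    have "F = 0" if "\<forall>k. coeff F k = 0" for F :: "complex poly"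
      using that by (intro poly_eqI) simp
    then show ?thesis unfolding orth_def bnd_def by (metis Lfun_zero le0 mult_zero_left)
  qed
  moreover have "bnd (Suc (Suc 0)) [:-a, 1:]" by (auto simp: bnd_def coeff_pCons split: nat.splits)
  moreover have "orth p (Suc 0) [:-a, 1:]"
    unfolding orth_def
  proof (intro allI impI)
    fix F assume "bnd (Suc 0) F"
    then have F: "F = [:coeff F 0:]"
      by (intro poly_eqI) (auto simp: bnd_def coeff_pCons split: nat.splits)
    have "[:-a, 1:] = [:0,1:] - smult a 1" by simp
    then have "?L [:-a, 1:] = ?L [:0,1:] - a * ?L 1" by (metis Lfun_minus Lfun_smult)
    also have "\<dots> = 0" using L1 by (simp add: a_def)
    finally have "?L [:-a, 1:] = 0" .
    then show "?L (F * [:-a, 1:]) = 0"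
    proof -
      have e: "F * [:-a, 1:] = smult (coeff F 0) [:-a, 1:]"
        by (subst F) simp
      show ?thesis unfolding e Lfun_smult using \<open>?L [:-a, 1:] = 0\<close> by simp
    qed
  qed
  ultimately show ?case using Q1 by simp
next
  case (Suc n)
  let ?L = "Lfun p"
  let ?Qr = "opoly ?L n" and ?Qs = "opoly ?L (Suc n)"
  from Suc have IH: "bnd (Suc n) ?Qr" "coeff ?Qr n = 1" "orth p n ?Qr"
      "bnd (Suc (Suc n)) ?Qs" "coeff ?Qs (Suc n) = 1" "orth p (Suc n) ?Qs" by auto
  define a where "a = ?L ([:0, 1:] * ?Qs\<^sup>2) / ?L (?Qs\<^sup>2)"
  define b where "b = ?L (?Qs\<^sup>2) / ?L (?Qr\<^sup>2)"
  have nr: "?L (?Qr\<^sup>2) \<noteq> 0" using nd[of n] Suc.prems by simp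
  have ns: "?L (?Qs\<^sup>2) \<noteq> 0" using nd[of "Suc n"] Suc.prems by simp
  have P: "opoly ?L (Suc (Suc n)) = [:-a, 1:] * ?Qs - smult b ?Qr"
    by (simp add: a_def b_def Let_def)
  have bndP: "bnd (Suc (Suc (Suc n))) ([:-a, 1:] * ?Qs - smult b ?Qr)"
    using IH(1,4) unfolding bnd_def by (auto simp: coeff_pCons split: nat.splits)
  have cP: "coeff ([:-a, 1:] * ?Qs - smult b ?Qr) (Suc (Suc n)) = 1"
    using IH(1,4,5) unfolding bnd_def by auto
  have key: "?L (H * ([:-a, 1:] * ?Qs - smult b ?Qr)) =
      ?L (([:0,1:] * H) * ?Qs) - a * ?L (H * ?Qs) - b * ?L (H * ?Qr)" for H
  proof -
    have "H * ([:-a, 1:] * ?Qs - smult b ?Qr) =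
        ([:0,1:] * H) * ?Qs - smult a (H * ?Qs) - smult b (H * ?Qr)"
    proof -
      have "[:-a, 1:] = [:0,1:] - smult a 1" by simp
      then show ?thesis by (simp add: algebra_simps)
    qed
    then show ?thesis by (simp add: Lfun_minus Lfun_smult)
  qed
  have orthP: "orth p (Suc (Suc n)) ([:-a, 1:] * ?Qs - smult b ?Qr)"
    unfolding orth_def
  proof (intro allI impI)
    fix F assume F: "bnd (Suc (Suc n)) F"
    define c1 where "c1 = coeff F (Suc n)"
    define F1 where "F1 = F - smult c1 ?Qs"
    have F1: "bnd (Suc n) F1" unfolding F1_def c1_def by (rule bnd_decomp) (use F IH in auto)
    define c0 where "c0 = coeff F1 n"
    define G where "G = F1 - smult c0 ?Qr"
    have G: "bnd n G" unfolding G_def c0_def by (rule bnd_decomp) (use F1 IH in auto)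
    have Fe: "F = smult c1 ?Qs + smult c0 ?Qr + G" by (simp add: G_def F1_def)
    have g: "?L (G * ([:-a, 1:] * ?Qs - smult b ?Qr)) = 0"
      unfolding key
      using orth_bnd[OF IH(6) bnd_x[OF G]] orth_bnd[OF IH(6) bnd_mono[OF G]]
        orth_bnd[OF IH(3) G] by simp
    have rs: "?L (?Qr * ?Qs) = 0" using orth_bnd[OF IH(6) IH(1)] .
    have xr: "bnd (Suc n) ([:0,1:] * ?Qr - ?Qs)"
      unfolding bnd_def
    proof (intro allI impI)
      fix k assume k: "Suc n \<le> k"
      then obtain k' where k': "k = Suc k'" "n \<le> k'" by (cases k) auto
      show "coeff ([:0,1:] * ?Qr - ?Qs) k = 0"
      proof (cases "k' = n")
        case True then show ?thesis using k' IH(2,5) by simp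
      next
        case False then show ?thesis using k' IH(1,4) unfolding bnd_def by simp
      qed
    qed
    have "?L (([:0,1:] * ?Qr) * ?Qs) = ?L (?Qs * ?Qs) + ?L (([:0,1:] * ?Qr - ?Qs) * ?Qs)"
    proof -
      have "([:0,1:] * ?Qr) * ?Qs = ?Qs * ?Qs + ([:0,1:] * ?Qr - ?Qs) * ?Qs"
        by (simp add: algebra_simps)
      then show ?thesis by (metis Lfun_add)
    qed
    also have "\<dots> = ?L (?Qs\<^sup>2)" using orth_bnd[OF IH(6) xr] by (simp add: power2_eq_square)
    finally have xrs: "?L (([:0,1:] * ?Qr) * ?Qs) = ?L (?Qs\<^sup>2)" .
    have r: "?L (?Qr * ([:-a, 1:] * ?Qs - smult b ?Qr)) = 0"
      unfolding key rs xrs using nr by (simp add: b_def power2_eq_square)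
    have sr: "?L (?Qs * ?Qr) = 0" using rs by (simp add: mult.commute)
    have s: "?L (?Qs * ([:-a, 1:] * ?Qs - smult b ?Qr)) = 0"
      unfolding key sr using ns by (simp add: a_def power2_eq_square mult.assoc)
    show "?L (F * ([:-a, 1:] * ?Qs - smult b ?Qr)) = 0"
      unfolding Fe distrib_right Lfun_add mult_smult_left Lfun_smult g r s by simp
  qed
  show ?case using IH bndP cP orthP P by simp
qed



lemma kernel_exists:
  fixes M :: "nat \<Rightarrow> nat \<Rightarrow> complex"
  assumes "finite J" "finite I" "card J < card I"
  shows "\<exists>c. (\<exists>i\<in>I. c i \<noteq> 0) \<and> (\<forall>j\<in>J. (\<Sum>i\<in>I. M j i * c i) = 0)"
  using assms
proof (induction J arbitrary: I M rule: finite_induct)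
  case empty
  then have "I \<noteq> {}" by auto
  then show ?case by (intro exI[of _ "\<lambda>_. 1"]) auto
next
  case (insert r J0)
  show ?case
  proof (cases "\<forall>i\<in>I. M r i = 0")
    case True
    from insert.IH[of I M] insert.prems insert.hyps obtain c where
      c: "\<exists>i\<in>I. c i \<noteq> 0" "\<forall>j\<in>J0. (\<Sum>i\<in>I. M j i * c i) = 0" by auto
    then show ?thesis using True by (intro exI[of _ c]) auto
  next
    case False
    then obtain i0 where i0: "i0 \<in> I" "M r i0 \<noteq> 0" by auto
    define I0 where "I0 = I - {i0}"
    have fI0: "finite I0" using insert.prems by (simp add: I0_def)
    have cI0: "card J0 < card I0" using insert.prems insert.hyps i0 by (simp add: I0_def)
    define M' where "M' j i = M j i - M j i0 / M r i0 * M r i" for j i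
    from insert.IH[OF fI0 cI0, of M'] obtain c' where
      c': "\<exists>i\<in>I0. c' i \<noteq> 0" "\<forall>j\<in>J0. (\<Sum>i\<in>I0. M' j i * c' i) = 0" by auto
    define S where "S = (\<Sum>i\<in>I0. M r i * c' i)"
    define c where "c i = (if i = i0 then - S / M r i0 else c' i)" for i
    have split: "(\<Sum>i\<in>I. M j i * c i) = (\<Sum>i\<in>I0. M j i * c' i) + M j i0 * c i0" for j
    proof -
      have "(\<Sum>i\<in>I. M j i * c i) = M j i0 * c i0 + (\<Sum>i\<in>I0. M j i * c i)"
        unfolding I0_def using i0 insert.prems by (simp add: sum.remove)
      also have "(\<Sum>i\<in>I0. M j i * c i) = (\<Sum>i\<in>I0. M j i * c' i)"
        by (rule sum.cong) (auto simp: c_def I0_def)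
      finally show ?thesis by simp
    qed
    have "\<exists>i\<in>I. c i \<noteq> 0" using c' by (auto simp: c_def I0_def)
    moreover have "(\<Sum>i\<in>I. M j i * c i) = 0" if j: "j \<in> insert r J0" for j
    proof (cases "j = r")
      case True
      then show ?thesis unfolding split using i0 by (simp add: c_def S_def)
    next
      case False
      then have jJ: "j \<in> J0" using j by auto
      have "(\<Sum>i\<in>I0. M j i * c' i) = (\<Sum>i\<in>I0. M' j i * c' i) + M j i0 / M r i0 * S"
        by (simp add: M'_def S_def algebra_simps sum.distrib sum_distrib_left sum_subtractf)
      also have "\<dots> = M j i0 / M r i0 * S" using c'(2) jJ by simp
      finally show ?thesis unfolding split using i0 by (simp add: c_def)
    qed
    ultimately show ?thesis by blast
  qed
qed



lemma uniq:
  fixes p :: nat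
  assumes nd: "\<And>n. n \<le> 2 * p \<Longrightarrow> Lfun p ((opoly (Lfun p) n)\<^sup>2) \<noteq> 0"
  shows "d \<le> 2*p+1 \<Longrightarrow> bnd d D \<Longrightarrow> orth p (2*p+1) D \<Longrightarrow> D = 0"
proof (induction d)
  case 0
  then show ?case by (intro poly_eqI) (simp add: bnd_def)
next
  case (Suc d)
  let ?Q = "opoly (Lfun p) d"
  from opoly_props[OF nd, of d] Suc.prems have Q: "bnd (Suc d) ?Q" "coeff ?Q d = 1" "orth p d ?Q"
    by auto
  define c where "c = coeff D d"
  define D' where "D' = D - smult c ?Q"
  have D': "bnd d D'" unfolding D'_def c_def by (rule bnd_decomp) (use Suc.prems Q in auto)
  have "Lfun p (?Q * D) = 0" using orth_bnd[OF Suc.prems(3) bnd_mono[OF Q(1)]] Suc.prems by simp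
  moreover have "D = smult c ?Q + D'" by (simp add: D'_def)
  ultimately have "c * Lfun p (?Q * ?Q) + Lfun p (D' * ?Q) = 0"
  proof -
    assume a1: "Lfun p (?Q * D) = 0" and a2: "D = smult c ?Q + D'"
    have "?Q * D = smult c (?Q * ?Q) + D' * ?Q" by (subst a2) (simp add: algebra_simps)
    then show ?thesis using a1 by (simp only: Lfun_add Lfun_smult)
  qed
  then have "c * Lfun p (?Q\<^sup>2) = 0" using orth_bnd[OF Q(3) D'] by (simp add: power2_eq_square)
  then have "c = 0" using nd[of d] Suc.prems by simp
  then have "bnd d D" using Suc.prems(2) unfolding bnd_def c_def
    by (metis Suc_leI le_neq_implies_less)
  then show ?case using Suc by simp
qed

theorem proposition1:
  fixes p :: nat
  assumes p1: "p \<ge> 1"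
    and nd: "\<And>n. n \<le> 2 * p \<Longrightarrow> Lfun p ((opoly (Lfun p) n)\<^sup>2) \<noteq> 0"
  shows "\<forall>x::complex. x \<noteq> 0 \<longrightarrow>
           poly (opoly (Lfun p) (2 * p + 1)) x
             = - (x ^ (2 * p + 1)) * poly (opoly (Lfun p) (2 * p + 1)) (1 / x)"
proof -
  define m where "m = 2*p+1"
  define P where "P = opoly (Lfun p) m"
  from opoly_props[OF nd, of "2*p"] have PP: "bnd (Suc m) P" "coeff P m = 1" "orth p m P"
    by (auto simp: m_def P_def)
  define e where "e j i = moment p (j+i) - moment p (j+m-i)" for j i
  obtain c where c: "\<exists>i\<in>{..p}. c i \<noteq> 0" "\<forall>j\<in>{..<p}. (\<Sum>i\<le>p. e j i * c i) = 0"
    using kernel_exists[of "{..<p}" "{..p}" e] by auto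
  define A where "A = (\<Sum>i\<le>p. smult (c i) (monom 1 i - monom 1 (m-i)))"
  have LA: "Lfun p (monom 1 j * A) = (\<Sum>i\<le>p. e j i * c i)" for j
  proof -
    have "monom 1 j * A = (\<Sum>i\<le>p. monom (c i) (j+i) - monom (c i) (j+m-i))"
      unfolding A_def sum_distrib_left
    proof (rule sum.cong)
      fix i assume "i \<in> {..p}"
      then have "j + (m - i) = j+m-i" by (simp add: m_def)
      then show "monom 1 j * smult (c i) (monom 1 i - monom 1 (m - i)) =
          monom (c i) (j + i) - monom (c i) (j + m - i)"
        by (simp add: mult_smult_right right_diff_distrib mult_monom smult_diff_right smult_monom)
    qed simp
    then show ?thesis by (simp add: Lfun_sum Lfun_minus Lfun_monom e_def algebra_simps)
  qed
  have esym: "e j i = - e (2*p-j) i" if "j \<le> 2*p" "i \<le> p" for j i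
  proof -
    have 1: "moment p (j+i) = moment p (2*p-j + m - i)"
      using moment_sym[of "j+i" p] that by (simp add: m_def)
    have 2: "moment p (j+m-i) = moment p (2*p-j + i)"
      using moment_sym[of "j+m-i" p] that by (simp add: m_def)
    show ?thesis unfolding e_def 1 2 by simp
  qed
  have ez: "(\<Sum>i\<le>p. e j i * c i) = 0" if "j < m" for j
  proof (cases "j < p")
    case True then show ?thesis using c(2) by simp
  next
    case False
    have "(\<Sum>i\<le>p. e j i * c i) = - (\<Sum>i\<le>p. e (2*p-j) i * c i)"
    proof -
      have "(\<Sum>i\<le>p. e j i * c i) = (\<Sum>i\<le>p. - (e (2*p-j) i * c i))"
      proof (rule sum.cong[OF refl])
        fix i assume "i \<in> {..p}"
        then have "e j i = - e (2*p-j) i" using that by (intro esym) (auto simp: m_def)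
        then show "e j i * c i = - (e (2*p-j) i * c i)" by simp
      qed
      then show ?thesis by (simp add: sum_negf)
    qed
    moreover have "(\<Sum>i\<le>p. e (2*p-j) i * c i) = 0" if "j > p"
    proof -
      have "2*p-j < p" using that \<open>p \<ge> 1\<close> by arith
      then show ?thesis using c(2) by simp
    qed
    moreover have "j = p \<Longrightarrow> 2*p-j = j" by simp
    ultimately show ?thesis using False by (cases "j = p") auto
  qed
  have orthA: "orth p m A"
    unfolding orth_def
  proof (intro allI impI)
    fix F assume F: "bnd m F"
    have Fe: "F = (\<Sum>j<m. smult (coeff F j) (monom 1 j))"
    proof (rule poly_eqI)
      fix n
      show "coeff F n = coeff (\<Sum>j<m. smult (coeff F j) (monom 1 j)) n"
        using F by (cases "n < m") (auto simp: bnd_def coeff_sum coeff_monom if_distrib[of "\<lambda>x. coeff F _ * x"] sum.delta sum.delta' cong: if_cong)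
    qed
    have "Lfun p (F * A) = (\<Sum>j<m. coeff F j * Lfun p (monom 1 j * A))"
      by (subst Fe) (simp add: sum_distrib_right Lfun_sum Lfun_smult)
    then show "Lfun p (F * A) = 0" by (simp add: LA ez)
  qed
  have cA: "coeff A k = (if k \<le> p then c k else 0) - (if k \<le> m \<and> m - k \<le> p then c (m-k) else 0)" for k
  proof -
    have "coeff A k = (\<Sum>i\<le>p. c i * (if i = k then 1 else 0)) - (\<Sum>i\<le>p. c i * (if m - i = k then 1 else 0))"
      by (simp add: A_def coeff_sum coeff_monom algebra_simps sum_subtractf)
    also have "(\<Sum>i\<le>p. c i * (if i = k then 1 else 0)) = (if k \<le> p then c k else 0)"
      by (simp add: if_distrib[of "\<lambda>x. c _ * x"] sum.delta cong: if_cong)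
    also have "(\<Sum>i\<le>p. c i * (if m - i = k then 1 else 0)) = (if k \<le> m \<and> m - k \<le> p then c (m-k) else 0)"
    proof (cases "k \<le> m")
      case True
      have "(\<Sum>i\<le>p. c i * (if m - i = k then 1 else 0)) = (\<Sum>i\<le>p. if m - k = i then c i else 0)"
        by (rule sum.cong) (use True in \<open>auto simp: m_def\<close>)
      then show ?thesis using True by (simp add: sum.delta)
    next
      case False
      then show ?thesis by (auto simp: m_def intro!: sum.neutral)
    qed
    finally show ?thesis .
  qed
  have bA: "bnd (Suc m) A" unfolding bnd_def cA by (auto simp: m_def)
  have Anz: "A \<noteq> 0"
  proof
    assume "A = 0"
    then have "\<forall>k. coeff A k = 0" by simp
    with c(1) obtain i where "i \<le> p" "c i \<noteq> 0" by auto
    moreover from \<open>\<forall>k. coeff A k = 0\<close> have "coeff A i = 0" by simp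
    moreover have "coeff A i = c i" unfolding cA using \<open>i \<le> p\<close> by (simp add: m_def)
    ultimately show False by simp
  qed
  define D where "D = A - smult (coeff A m) P"
  have bD: "bnd m D" unfolding D_def by (rule bnd_decomp) (use bA PP in auto)
  have oD: "orth p m D" unfolding orth_def
  proof (intro allI impI)
    fix F assume "bnd m F"
    then show "Lfun p (F * D) = 0"
      using orth_bnd[OF orthA] orth_bnd[OF PP(3)]
      by (simp add: D_def right_diff_distrib Lfun_minus Lfun_smult mult_smult_right)
  qed
  have "D = 0" using uniq[OF nd, of m D] bD oD by (simp add: m_def)
  then have AP: "A = smult (coeff A m) P" by (simp add: D_def)
  with Anz have kn: "coeff A m \<noteq> 0" by auto
  have anti: "coeff P (m-k) = - coeff P k" if "k \<le> m" for k
  proof -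
    have "coeff A (m-k) = - coeff A k" unfolding cA using that by (auto simp: m_def)
    then have "coeff A m * coeff P (m-k) = - (coeff A m * coeff P k)"
      by (subst (asm) (1 2) AP) simp
    then have "coeff A m * (coeff P (m-k) + coeff P k) = 0" by (simp add: algebra_simps)
    then have "coeff P (m-k) + coeff P k = 0" using kn by simp
    then show ?thesis by (simp add: eq_neg_iff_add_eq_0)
  qed
  have dP: "degree P = m"
  proof (rule antisym)
    show "degree P \<le> m" using PP(1) by (intro degree_le) (auto simp: bnd_def)
    show "m \<le> degree P" using PP(2) by (intro le_degree) simp
  qed
  have rP: "reflect_poly P = - P"
  proof (rule poly_eqI)
    fix n
    show "coeff (reflect_poly P) n = coeff (- P) n"
      using PP(1) anti[of n] by (auto simp: coeff_reflect_poly dP bnd_def)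
  qed
  show ?thesis
  proof (intro allI impI)
    fix x :: complex assume "x \<noteq> 0"
    have "poly P x = - poly (reflect_poly P) x" by (simp add: rP)
    also have "\<dots> = - (x ^ m) * poly P (1/x)"
      using poly_reflect_poly_nz[OF \<open>x \<noteq> 0\<close>, of P] by (simp add: dP inverse_eq_divide)
    finally show "poly (opoly (Lfun p) (2 * p + 1)) x
             = - (x ^ (2 * p + 1)) * poly (opoly (Lfun p) (2 * p + 1)) (1 / x)"
      by (simp add: P_def m_def)
  qed
qed

end
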